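(* Let $a_1, \dots, a_n \in \mathbb{Z}^d$ be pairwise distinct primitive integer vectors, let $D \subseteq (0,\infty)$ be a dense subset, and for each $w \in \mathbb{Z}^d$ let $f_w : \mathbb{R} \to \mathbb{R}$ be a function. Then there is at most one tuple of real numbers $(b_1, \dots, b_n)$ such that: $P = \bigcap_{i=1}^n \{x \in \mathbb{R}^d : \langle a_i, x\rangle \le b_i\}$ is a full-dimensional polytope; $f_w(s) = L_{P+w}(s)$ for all $w \in \mathbb{Z}^d$ and all $s \in D$; and for each $i$ the set $F_i = P \cap \{x : \langle a_i, x\rangle = b_i\}$ is a nonempty face of $P$.
   Context: For a polytope $P \subseteq \mathbb{R}^d$ and real $s \ge 0$, $L_P(s) = \#(sP \cap \mathbb{Z}^d)$, where $sP = \{sx : x \in P\}$. A vector $a \in \mathbb{Z}^d$ is primitive if the greatest common divisor of its coordinates is $1$. *)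

theory Defs
  imports "HOL-Analysis.Analysis"
begin

definition real_of_intvec :: "int^'d \<Rightarrow> real^'d" where
  "real_of_intvec z = (\<chi> j. of_int (z $ j))"

definition primitive :: "int^'d \<Rightarrow> bool" where
  "primitive a \<longleftrightarrow> Gcd (range (\<lambda>j. a $ j)) = 1"

text \<open>L_P(s) = number of integer points in the dilate sP.\<close>
definition lattice_count :: "(real^'d) set \<Rightarrow> real \<Rightarrow> nat" where
  "lattice_count P s = card {z :: int^'d. real_of_intvec z \<in> (\<lambda>x. s *\<^sub>R x) ` P}"

definition translate :: "(real^'d) set \<Rightarrow> int^'d \<Rightarrow> (real^'d) set" where
  "translate P w = (\<lambda>x. x + real_of_intvec w) ` P"

definition hpoly :: "nat \<Rightarrow> (nat \<Rightarrow> int^'d) \<Rightarrow> (nat \<Rightarrow> real) \<Rightarrow> (real^'d) set" where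
  "hpoly n a b = (\<Inter>i\<in>{..<n}. {x. real_of_intvec (a i) \<bullet> x \<le> b i})"

end

theory Submission
  imports Defs
begin

lemma int_nonempty:
  fixes S :: "(real^'d) set"
  assumes "convex S" "aff_dim S = int CARD('d)"
  shows "interior S \<noteq> {}"
proof -
  have "affine hull S = UNIV" using assms(2) aff_dim_eq_full[of S] by simp
  hence "rel_interior S = interior S" by (rule rel_interior_interior)
  moreover have "S \<noteq> {}" using assms(2) by auto
  ultimately show ?thesis using rel_interior_eq_empty[OF assms(1)] by auto
qed

lemma mem_count_set:
  fixes P :: "(real^'d) set"
  assumes "s > 0"
  shows "real_of_intvec u \<in> (\<lambda>x. s *\<^sub>R x) ` translate P w \<longleftrightarrow>
    (1/s) *\<^sub>R real_of_intvec u - real_of_intvec w \<in> P"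
proof
  assume "real_of_intvec u \<in> (\<lambda>x. s *\<^sub>R x) ` translate P w"
  then obtain x where "x \<in> P" "real_of_intvec u = s *\<^sub>R (x + real_of_intvec w)"
    unfolding translate_def by auto
  then show "(1/s) *\<^sub>R real_of_intvec u - real_of_intvec w \<in> P" using assms by simp
next
  assume h: "(1/s) *\<^sub>R real_of_intvec u - real_of_intvec w \<in> P"
  have "real_of_intvec u = s *\<^sub>R (((1/s) *\<^sub>R real_of_intvec u - real_of_intvec w) + real_of_intvec w)"
    using assms by simp
  then show "real_of_intvec u \<in> (\<lambda>x. s *\<^sub>R x) ` translate P w"
    unfolding translate_def using h by blast
qed

lemma sep:
  fixes u v w :: "int^'d"
  assumes "t > 2*R" "norm (t *\<^sub>R real_of_intvec u - real_of_intvec w) \<le> R"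
    "norm (t *\<^sub>R real_of_intvec v - real_of_intvec w) \<le> R"
  shows "u = v"
proof (rule ccontr)
  assume "u \<noteq> v"
  then obtain j where j: "u $ j \<noteq> v $ j" by (metis vec_eq_iff)
  hence "\<bar>real_of_int (u$j) - real_of_int (v$j)\<bar> \<ge> 1" by linarith
  have R0: "R \<ge> 0" using assms(2) norm_ge_zero order_trans by blast
  hence tpos: "t > 0" using assms(1) by linarith
  have "norm ((t *\<^sub>R real_of_intvec u - real_of_intvec w) - (t *\<^sub>R real_of_intvec v - real_of_intvec w)) \<le> 2*R"
    using norm_triangle_ineq4[of "t *\<^sub>R real_of_intvec u - real_of_intvec w" "t *\<^sub>R real_of_intvec v - real_of_intvec w"] assms by linarith
  moreover have "\<bar>((t *\<^sub>R real_of_intvec u - real_of_intvec w) - (t *\<^sub>R real_of_intvec v - real_of_intvec w)) $ j\<bar> \<le> norm ((t *\<^sub>R real_of_intvec u - real_of_intvec w) - (t *\<^sub>R real_of_intvec v - real_of_intvec w))"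
    by (rule component_le_norm_cart)
  moreover have "((t *\<^sub>R real_of_intvec u - real_of_intvec w) - (t *\<^sub>R real_of_intvec v - real_of_intvec w)) $ j = t * (real_of_int (u$j) - real_of_int (v$j))"
    by (simp add: real_of_intvec_def algebra_simps)
  moreover have "\<bar>t * (real_of_int (u$j) - real_of_int (v$j))\<bar> \<ge> t"
    using \<open>\<bar>real_of_int (u$j) - real_of_int (v$j)\<bar> \<ge> 1\<close> tpos by (simp add: abs_mult)
  ultimately show False using assms(1) by linarith
qed

lemma key:
  fixes P P' :: "(real^'d) set" and D :: "real set"
  assumes cP: "compact P" and cP': "compact P'" and cvx: "convex P" and intP: "interior P \<noteq> {}"
    and D_pos: "D \<subseteq> {0<..}" and D_dense: "{0<..} \<subseteq> closure D"
    and eq: "\<forall>w. \<forall>s\<in>D. lattice_count (translate P w) s = lattice_count (translate P' w) s"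
  shows "P \<subseteq> P'"
proof (rule ccontr)
  assume "\<not> P \<subseteq> P'"
  then obtain x where x: "x \<in> P" "x \<notin> P'" by auto
  have "open (- P')" using cP' compact_imp_closed by blast
  then obtain r1 where r1: "r1 > 0" "ball x r1 \<subseteq> - P'" using x(2) open_contains_ball by blast
  have "x \<in> closure (interior P)" using convex_closure_interior[OF cvx intP] x(1) closure_subset by blast
  then obtain x0 where x0: "x0 \<in> interior P" "dist x0 x < r1/2"
    using r1(1) closure_approachable by (metis half_gt_zero)
  then obtain r2 where r2: "r2 > 0" "ball x0 r2 \<subseteq> P" using interior_def open_contains_ball
    by (metis mem_interior)
  define r where "r = min r2 (r1/2)"
  have rpos: "r > 0" using r1 r2 by (simp add: r_def)
  have ballP: "ball x0 r \<subseteq> P" using r2 by (auto simp: r_def)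
  have ballP': "ball x0 r \<inter> P' = {}"
  proof -
    have "ball x0 r \<subseteq> ball x r1"
    proof
      fix v assume "v \<in> ball x0 r"
      hence "dist x0 v < r1/2" by (simp add: r_def)
      moreover have "dist x v \<le> dist x x0 + dist x0 v" by (rule dist_triangle)
      ultimately show "v \<in> ball x r1" using x0(2) by (simp add: dist_commute)
    qed
    thus ?thesis using r1 by auto
  qed
  obtain R where R: "R > 0" "\<forall>y\<in>P \<union> P'. norm y \<le> R"
    using bounded_pos compact_imp_bounded cP cP' bounded_Un by metis
  define N :: nat where "N = nat \<lceil>2*R\<rceil> + 1"
  have N: "real N > 2*R" unfolding N_def by linarith
  have Npos: "real N > 0" using N R by linarith
  define e0 where "e0 = r / real CARD('d)"
  have e0: "e0 > 0" using rpos by (simp add: e0_def)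
  define U where "U = {1/(real N + e0)<..<1/real N}"
  have Uopen: "open U" by (simp add: U_def)
  have "1/(real N + e0) < 1/real N" using Npos e0 by (simp add: frac_less2)
  then obtain m where m1: "1/(real N + e0) < m" and m2: "m < 1/real N" by (meson dense)
  have m: "m \<in> U" using m1 m2 by (simp add: U_def)
  have "1/(real N + e0) > 0" using Npos e0 by simp
  hence "m > 0" using m1 by linarith
  hence "m \<in> closure D" using D_dense by auto
  hence "U \<inter> closure D \<noteq> {}" using m by auto
  hence "U \<inter> D \<noteq> {}" using open_Int_closure_eq_empty[OF Uopen] by blast
  then obtain s where s: "s \<in> D" "s \<in> U" by auto
  have spos: "s > 0" using s D_pos by auto
  define t where "t = 1/s"
  have tN: "t > real N" using s(2) Npos spos unfolding U_def t_def
    by (simp add: field_simps)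
  have tN2: "t < real N + e0" using s(2) Npos spos e0 unfolding U_def t_def
    by (simp add: field_simps)
  define e where "e = t - real N"
  have e: "e > 0" "e < e0" using tN tN2 by (auto simp: e_def)
  define z :: "int^'d" where "z = (\<chi> j. \<lfloor>x0$j / e\<rfloor>)"
  define w :: "int^'d" where "w = (\<chi> j. int N * z$j)"
  define y where "y = t *\<^sub>R real_of_intvec z - real_of_intvec w"
  have ycomp: "y $ j = e * real_of_int (z$j)" for j
    by (simp add: y_def w_def real_of_intvec_def e_def algebra_simps)
  have comp: "\<bar>(y - x0) $ j\<bar> < e" for j
  proof -
    have "real_of_int (z$j) \<le> x0$j / e" "x0$j / e < real_of_int (z$j) + 1"
      by (auto simp: z_def)
    hence "e * real_of_int (z$j) \<le> x0$j" "x0$j < e * real_of_int (z$j) + e"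
      using e(1) by (auto simp: field_simps)
    thus ?thesis using ycomp[of j] by auto
  qed
  have "norm (y - x0) \<le> (\<Sum>j\<in>UNIV. \<bar>(y - x0)$j\<bar>)" by (rule norm_le_l1_cart)
  also have "\<dots> < (\<Sum>j\<in>(UNIV::'d set). e)"
    using comp[simplified] by (intro sum_strict_mono) auto
  also have "\<dots> = real CARD('d) * e" by simp
  also have "\<dots> \<le> real CARD('d) * e0" using e by simp
  also have "\<dots> = r" by (simp add: e0_def)
  finally have "y \<in> ball x0 r" by (simp add: dist_norm norm_minus_commute)
  hence yP: "y \<in> P" and yP': "y \<notin> P'" using ballP ballP' by auto
  have t2R: "t > 2*R" using tN N by linarith
  have setP: "{u. real_of_intvec u \<in> (\<lambda>x. s *\<^sub>R x) ` translate P w} = {z}"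
  proof -
    have "real_of_intvec u \<in> (\<lambda>x. s *\<^sub>R x) ` translate P w \<longleftrightarrow> u = z" for u
    proof
      assume "real_of_intvec u \<in> (\<lambda>x. s *\<^sub>R x) ` translate P w"
      hence "t *\<^sub>R real_of_intvec u - real_of_intvec w \<in> P" using mem_count_set[OF spos] t_def by auto
      thus "u = z" using sep[OF t2R, of u w z] R yP y_def by auto
    next
      assume "u = z" thus "real_of_intvec u \<in> (\<lambda>x. s *\<^sub>R x) ` translate P w"
        using mem_count_set[OF spos] yP y_def t_def by auto
    qed
    thus ?thesis by auto
  qed
  have setP': "{u. real_of_intvec u \<in> (\<lambda>x. s *\<^sub>R x) ` translate P' w} = {}"
  proof -
    have "real_of_intvec u \<notin> (\<lambda>x. s *\<^sub>R x) ` translate P' w" for u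
    proof
      assume "real_of_intvec u \<in> (\<lambda>x. s *\<^sub>R x) ` translate P' w"
      hence h: "t *\<^sub>R real_of_intvec u - real_of_intvec w \<in> P'" using mem_count_set[OF spos] t_def by auto
      hence "u = z" using sep[OF t2R, of u w z] R yP y_def by auto
      thus False using h yP' y_def by auto
    qed
    thus ?thesis by auto
  qed
  have "lattice_count (translate P w) s = 1" unfolding lattice_count_def setP by simp
  moreover have "lattice_count (translate P' w) s = 0" unfolding lattice_count_def setP' by simp
  ultimately show False using eq s(1) by auto
qed

theorem theorem4p3:
  fixes n :: nat
    and a :: "nat \<Rightarrow> int^'d"
    and D :: "real set"
    and f :: "int^'d \<Rightarrow> real \<Rightarrow> real"
  assumes prim: "\<forall>i<n. primitive (a i)"
    and distinct: "\<forall>i<n. \<forall>j<n. i \<noteq> j \<longrightarrow> a i \<noteq> a j"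
    and D_pos: "D \<subseteq> {0<..}"
    and D_dense: "{0<..} \<subseteq> closure D"
  shows "\<forall>b b' :: nat \<Rightarrow> real.
    (polytope (hpoly n a b) \<and> aff_dim (hpoly n a b) = int CARD('d) \<and>
     (\<forall>w. \<forall>s\<in>D. f w s = real (lattice_count (translate (hpoly n a b) w) s)) \<and>
     (\<forall>i<n. hpoly n a b \<inter> {x. real_of_intvec (a i) \<bullet> x = b i} \<noteq> {} \<and>
            (hpoly n a b \<inter> {x. real_of_intvec (a i) \<bullet> x = b i}) face_of hpoly n a b))
    \<and>
    (polytope (hpoly n a b') \<and> aff_dim (hpoly n a b') = int CARD('d) \<and>
     (\<forall>w. \<forall>s\<in>D. f w s = real (lattice_count (translate (hpoly n a b') w) s)) \<and>
     (\<forall>i<n. hpoly n a b' \<inter> {x. real_of_intvec (a i) \<bullet> x = b' i} \<noteq> {} \<and>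
            (hpoly n a b' \<inter> {x. real_of_intvec (a i) \<bullet> x = b' i}) face_of hpoly n a b'))
    \<longrightarrow> (\<forall>i<n. b i = b' i)"
proof (rule allI, rule allI, rule impI)
  fix b b' :: "nat \<Rightarrow> real"
  assume H: "(polytope (hpoly n a b) \<and> aff_dim (hpoly n a b) = int CARD('d) \<and>
     (\<forall>w. \<forall>s\<in>D. f w s = real (lattice_count (translate (hpoly n a b) w) s)) \<and>
     (\<forall>i<n. hpoly n a b \<inter> {x. real_of_intvec (a i) \<bullet> x = b i} \<noteq> {} \<and>
            (hpoly n a b \<inter> {x. real_of_intvec (a i) \<bullet> x = b i}) face_of hpoly n a b))
    \<and>
    (polytope (hpoly n a b') \<and> aff_dim (hpoly n a b') = int CARD('d) \<and>
     (\<forall>w. \<forall>s\<in>D. f w s = real (lattice_count (translate (hpoly n a b') w) s)) \<and>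
     (\<forall>i<n. hpoly n a b' \<inter> {x. real_of_intvec (a i) \<bullet> x = b' i} \<noteq> {} \<and>
            (hpoly n a b' \<inter> {x. real_of_intvec (a i) \<bullet> x = b' i}) face_of hpoly n a b'))"
  define P where "P = hpoly n a b"
  define P' where "P' = hpoly n a b'"
  have eq: "\<forall>w. \<forall>s\<in>D. lattice_count (translate P w) s = lattice_count (translate P' w) s"
    using H unfolding P_def P'_def by (metis of_nat_eq_iff)
  have eq': "\<forall>w. \<forall>s\<in>D. lattice_count (translate P' w) s = lattice_count (translate P w) s"
    using eq by metis
  have "P \<subseteq> P'"
    by (rule key[OF _ _ _ _ D_pos D_dense eq])
      (use H int_nonempty polytope_imp_compact polytope_imp_convex in \<open>auto simp: P_def P'_def\<close>)
  moreover have "P' \<subseteq> P"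
    by (rule key[OF _ _ _ _ D_pos D_dense eq'])
      (use H int_nonempty polytope_imp_compact polytope_imp_convex in \<open>auto simp: P_def P'_def\<close>)
  ultimately have PP: "P = P'" by auto
  show "\<forall>i<n. b i = b' i"
  proof (intro allI impI)
    fix i assume i: "i < n"
    obtain x where x: "x \<in> P" "real_of_intvec (a i) \<bullet> x = b i" using H i unfolding P_def by blast
    obtain x' where x': "x' \<in> P'" "real_of_intvec (a i) \<bullet> x' = b' i" using H i unfolding P'_def by blast
    have "real_of_intvec (a i) \<bullet> x' \<le> b i" using x'(1) PP i unfolding P_def hpoly_def by auto
    moreover have "real_of_intvec (a i) \<bullet> x \<le> b' i" using x(1) PP i unfolding P'_def hpoly_def by auto
    ultimately show "b i = b' i" using x x' by linarith
  qed
qed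

end
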